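(* Let $\mathcal{T} = \{T_1, \ldots, T_t\}$ be a set of unrooted binary phylogenetic trees on a common leaf set $X$, let $\mathcal{Q}$ be the set of quartets that are incompatible quartets of $T_1$ and $T_i$ for some $2 \le i \le t$, and let $\tilde x$ be an optimal solution of the linear program $$\text{minimize } \sum_{e \in E(T_1)} x_e \quad \text{s.t. } \sum_{e \in L(Q)} x_e \ge 1 \ \ \forall Q \in \mathcal{Q}, \qquad x_e \ge 0\ \ \forall e \in E(T_1).$$ Let $E \subseteq E(T_1)$ be the edge set produced by the following rounding procedure. Root $T_1$ at an arbitrary leaf $r$; for each edge $e$ let $u_e$ be its endpoint on the path from $r$ to the other endpoint $v_e$. Start with $E = \emptyset$. For the current $E$ and each edge $e$, let $D(e)$ be the set of edges $f$ such that $v_e$ lies on the path from $r$ to $v_f$ and the path from $v_e$ to $v_f$ contains no edge of $E$, and let $w(e) = \sum_{f \in D(e)} \tilde x_f$. While there exists an edge $e$ with $w(e) \ge 1/4$ and $w(f) < 1/4$ for all $f \in D(e) \setminus \{e\}$, add one such edge $e$ to $E$ (recomputing $D$ and $w$ afterwards); stop when every edge $e \in E(T_1) \setminus E$ has $w(e) < 1/4$. Then the final set $E$ is a feasible solution of the integer program $$\text{minimize } \sum_{e \in E(T_1)} x_e \quad \text{s.t. } \sum_{e \in L(Q)} x_e \ge 1 \ \ \forall Q \in \mathcal{Q}, \qquad x_e \in \{0,1\}\ \ \forall e \in E(T_1),$$ i.e., $L(Q) \cap E \ne \emptyset$ for every $Q \in \mathcal{Q}$.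
   Context: A (binary) phylogenetic tree on a finite set $X$ is an unrooted tree whose internal vertices have degree 3 and whose leaves are bijectively labelled by $X$. Two phylogenetic trees on $X$ are isomorphic ($\cong$) if there is a graph isomorphism between them fixing every leaf label. For $Y \subseteq X$, $T[Y]$ is the minimal subtree of $T$ connecting the leaves in $Y$, and $T|_Y$ is obtained from $T[Y]$ by suppressing all degree-2 vertices. A quartet is a 4-element subset of $X$; for $Q=\{a,b,c,d\}$, $ab|cd$ is the tree on $Q$ where $a,b$ share a neighbour $u$, $c,d$ share a neighbour $v$, and $u,v$ are adjacent. If $T_1|_Q \cong ab|cd$, $L(Q)$ is the set of edges of $T_1[\{a,b\}] \cup T_1[\{c,d\}]$. $Q$ is an incompatible quartet of $T_1,T_i$ if $T_1|_Q \not\cong T_i|_Q$. A $0/1$ vector $x$ is identified with the edge set $\{e : x_e = 1\}$. *)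

theory Defs
  imports Complex_Main
begin

text \<open>A (phylogenetic) tree is a triple (V, E, lab): vertex set, set of undirected
  edges (2-element vertex sets) and a leaf labelling.\<close>
type_synonym ('v, 'x) ptree = "'v set \<times> 'v set set \<times> ('x \<Rightarrow> 'v)"

definition verts :: "('v, 'x) ptree \<Rightarrow> 'v set" where "verts T = fst T"
definition edges :: "('v, 'x) ptree \<Rightarrow> 'v set set" where "edges T = fst (snd T)"
definition lab :: "('v, 'x) ptree \<Rightarrow> 'x \<Rightarrow> 'v" where "lab T = snd (snd T)"

definition is_path :: "'v set set \<Rightarrow> 'v list \<Rightarrow> 'v \<Rightarrow> 'v \<Rightarrow> bool" where
  "is_path E p u v \<longleftrightarrow> p \<noteq> [] \<and> hd p = u \<and> last p = v \<and> distinct p \<and>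
     (\<forall>i. Suc i < length p \<longrightarrow> {p ! i, p ! Suc i} \<in> E)"

definition path_edges :: "'v list \<Rightarrow> 'v set set" where
  "path_edges p = {{p ! i, p ! Suc i} | i. Suc i < length p}"

definition has_cycle :: "'v set set \<Rightarrow> bool" where
  "has_cycle E \<longleftrightarrow> (\<exists>p. 3 \<le> length p \<and> distinct p \<and>
     (\<forall>i. Suc i < length p \<longrightarrow> {p ! i, p ! Suc i} \<in> E) \<and> {last p, hd p} \<in> E)"

definition is_tree :: "'v set \<Rightarrow> 'v set set \<Rightarrow> bool" where
  "is_tree V E \<longleftrightarrow> finite V \<and> V \<noteq> {} \<and>
     (\<forall>e\<in>E. \<exists>u v. e = {u, v} \<and> u \<noteq> v \<and> u \<in> V \<and> v \<in> V) \<and>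
     (\<forall>u\<in>V. \<forall>v\<in>V. \<exists>p. is_path E p u v) \<and> \<not> has_cycle E"

definition degree :: "'v set set \<Rightarrow> 'v \<Rightarrow> nat" where
  "degree E v = card {e \<in> E. v \<in> e}"

text \<open>Binary phylogenetic tree on X: a tree whose internal vertices have degree 3 and
  whose leaves (vertices of degree at most 1; degree 0 only for the one-vertex tree)
  are bijectively labelled by X.\<close>
definition phylo :: "'x set \<Rightarrow> ('v, 'x) ptree \<Rightarrow> bool" where
  "phylo X T \<longleftrightarrow> finite X \<and> is_tree (verts T) (edges T) \<and>
     inj_on (lab T) X \<and> lab T ` X = {v \<in> verts T. degree (edges T) v \<le> 1} \<and>
     (\<forall>v \<in> verts T. degree (edges T) v \<le> 1 \<or> degree (edges T) v = 3)"

definition span_edges :: "('v, 'x) ptree \<Rightarrow> 'x set \<Rightarrow> 'v set set" where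
  "span_edges T Y = \<Union>{path_edges p | p a b. a \<in> Y \<and> b \<in> Y \<and>
      is_path (edges T) p (lab T a) (lab T b)}"

definition span_verts :: "('v, 'x) ptree \<Rightarrow> 'x set \<Rightarrow> 'v set" where
  "span_verts T Y = lab T ` Y \<union> \<Union>(span_edges T Y)"

text \<open>restricts T Y S: S is a phylogenetic tree on Y isomorphic to T|_Y, i.e. T[Y] is a
  subdivision of S: vertices of S are embedded by phi into T[Y] (fixing leaf labels),
  every edge of S becomes a path of T[Y] whose interior avoids the image of phi, these
  paths are internally disjoint and together cover all edges of T[Y]. (Suppressing the
  degree-2 vertices of T[Y] exactly undoes such a subdivision.)\<close>
definition restricts :: "('v, 'x) ptree \<Rightarrow> 'x set \<Rightarrow> (nat, 'x) ptree \<Rightarrow> bool" where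
  "restricts T Y S \<longleftrightarrow> phylo Y S \<and>
     (\<exists>(\<phi> :: nat \<Rightarrow> 'v) (P :: nat set \<Rightarrow> 'v list).
        inj_on \<phi> (verts S) \<and> \<phi> ` verts S \<subseteq> span_verts T Y \<and>
        (\<forall>y\<in>Y. \<phi> (lab S y) = lab T y) \<and>
        (\<forall>e\<in>edges S. \<exists>s s'. e = {s, s'} \<and> is_path (edges T) (P e) (\<phi> s) (\<phi> s') \<and>
            set (P e) \<inter> \<phi> ` verts S = \<phi> ` e) \<and>
        (\<forall>e\<in>edges S. \<forall>e'\<in>edges S. e \<noteq> e' \<longrightarrow> set (P e) \<inter> set (P e') \<subseteq> \<phi> ` (e \<inter> e')) \<and>
        (\<Union>e\<in>edges S. path_edges (P e)) = span_edges T Y)"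

definition quartet_tree :: "'x \<Rightarrow> 'x \<Rightarrow> 'x \<Rightarrow> 'x \<Rightarrow> (nat, 'x) ptree" where
  "quartet_tree a b c d =
     ({0..5}, {{0,4}, {1,4}, {4,5}, {2,5}, {3,5}},
      (\<lambda>x. if x = a then 0 else if x = b then 1 else if x = c then 2 else 3))"

text \<open>T1|_Q and Ti|_Q are isomorphic iff some tree is (isomorphic to) both restrictions.\<close>
definition incompatible :: "('v, 'x) ptree \<Rightarrow> ('v, 'x) ptree \<Rightarrow> 'x set \<Rightarrow> bool" where
  "incompatible T1 Ti Q \<longleftrightarrow> \<not> (\<exists>S. restricts T1 Q S \<and> restricts Ti Q S)"

definition incomp_quartets :: "'x set \<Rightarrow> (nat \<Rightarrow> ('v, 'x) ptree) \<Rightarrow> nat \<Rightarrow> 'x set set" where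
  "incomp_quartets X T t =
     {Q. Q \<subseteq> X \<and> card Q = 4 \<and> (\<exists>i\<in>{2..t}. incompatible (T 1) (T i) Q)}"

definition Lset :: "('v, 'x) ptree \<Rightarrow> 'x set \<Rightarrow> 'v set set" where
  "Lset T Q = {e. \<exists>a b c d. Q = {a, b, c, d} \<and> restricts T Q (quartet_tree a b c d) \<and>
                  e \<in> span_edges T {a, b} \<union> span_edges T {c, d}}"

definition lp_feasible :: "('v, 'x) ptree \<Rightarrow> 'x set set \<Rightarrow> ('v set \<Rightarrow> real) \<Rightarrow> bool" where
  "lp_feasible T Qs x \<longleftrightarrow> (\<forall>e\<in>edges T. x e \<ge> 0) \<and> (\<forall>Q\<in>Qs. (\<Sum>e\<in>Lset T Q. x e) \<ge> 1)"

definition lp_optimal :: "('v, 'x) ptree \<Rightarrow> 'x set set \<Rightarrow> ('v set \<Rightarrow> real) \<Rightarrow> bool" where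
  "lp_optimal T Qs x \<longleftrightarrow> lp_feasible T Qs x \<and>
     (\<forall>y. lp_feasible T Qs y \<longrightarrow> (\<Sum>e\<in>edges T. x e) \<le> (\<Sum>e\<in>edges T. y e))"

definition lower_end :: "('v, 'x) ptree \<Rightarrow> 'v \<Rightarrow> 'v set \<Rightarrow> 'v" where
  "lower_end T r e = (THE v. \<exists>u. e = {u, v} \<and> u \<noteq> v \<and>
       (\<exists>p. is_path (edges T) p r v \<and> u \<in> set p))"

definition Dset :: "('v, 'x) ptree \<Rightarrow> 'v \<Rightarrow> 'v set set \<Rightarrow> 'v set \<Rightarrow> 'v set set" where
  "Dset T r E e = {f \<in> edges T.
      (\<exists>p. is_path (edges T) p r (lower_end T r f) \<and> lower_end T r e \<in> set p) \<and>
      (\<exists>q. is_path (edges T) q (lower_end T r e) (lower_end T r f) \<and> path_edges q \<inter> E = {})}"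

definition wt :: "('v, 'x) ptree \<Rightarrow> 'v \<Rightarrow> ('v set \<Rightarrow> real) \<Rightarrow> 'v set set \<Rightarrow> 'v set \<Rightarrow> real" where
  "wt T r x E e = (\<Sum>f\<in>Dset T r E e. x f)"

inductive round_reach :: "('v, 'x) ptree \<Rightarrow> 'v \<Rightarrow> ('v set \<Rightarrow> real) \<Rightarrow> 'v set set \<Rightarrow> bool"
  for T r x where
  start: "round_reach T r x {}"
| step: "round_reach T r x E \<Longrightarrow> e \<in> edges T \<Longrightarrow> wt T r x E e \<ge> 1/4 \<Longrightarrow>
         (\<forall>f\<in>Dset T r E e - {e}. wt T r x E f < 1/4) \<Longrightarrow> round_reach T r x (insert e E)"

end

theory Submission
  imports Defs
begin


lemma is_path_succ:
  "is_path E p u v \<longleftrightarrow> p \<noteq> [] \<and> hd p = u \<and> last p = v \<and> distinct p \<and>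
     successively (\<lambda>a b. {a,b} \<in> E) p"
  unfolding is_path_def successively_conv_nth by blast

lemma pe_Nil[simp]: "path_edges [] = {}" and pe_single[simp]: "path_edges [x] = {}"
  by (auto simp: path_edges_def)

lemma pe_Cons2[simp]: "path_edges (x # y # l) = insert {x,y} (path_edges (y # l))"
proof -
  have "path_edges (x # y # l) = {{(x#y#l) ! i, (x#y#l) ! Suc i} | i. Suc i < length (x#y#l)}"
    by (simp add: path_edges_def)
  also have "\<dots> = insert {x,y} {{(y#l) ! i, (y#l) ! Suc i} | i. Suc i < length (y#l)}"
    apply (rule set_eqI; rule iffI)
     apply (clarsimp; case_tac i; force)
    apply (auto)
     apply (rule_tac x=0 in exI; simp)
    apply (rule_tac x="Suc i" in exI; simp)
    done
  finally show ?thesis by (simp add: path_edges_def)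
qed

lemma pe_Cons: "path_edges (x # l) = (if l = [] then {} else insert {x, hd l} (path_edges l))"
  by (cases l) auto

lemma pe_append: "path_edges (a @ b) = path_edges a \<union> path_edges b \<union>
   (if a \<noteq> [] \<and> b \<noteq> [] then {{last a, hd b}} else {})"
  by (induction a rule: induct_list012) (auto simp: pe_Cons)

lemma pe_rev[simp]: "path_edges (rev l) = path_edges l"
  by (induction l rule: induct_list012) (auto simp: pe_append insert_commute)

lemma pe_mem: "f \<in> path_edges l \<longleftrightarrow> (\<exists>c d. l = c @ d \<and> c \<noteq> [] \<and> d \<noteq> [] \<and> f = {last c, hd d})"
proof
  assume "f \<in> path_edges l" then show "\<exists>c d. l = c @ d \<and> c \<noteq> [] \<and> d \<noteq> [] \<and> f = {last c, hd d}"
  proof (induction l rule: induct_list012)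
    case (3 x y l)
    show ?case
    proof (cases "f = {x,y}")
      case True then show ?thesis by (intro exI[of _ "[x]"] exI[of _ "y#l"]) auto
    next
      case False
      with 3(3) have "f \<in> path_edges (y#l)" by simp
      from 3(2)[OF this] obtain c d where "y#l = c@d" "c \<noteq> []" "d \<noteq> []" "f = {last c, hd d}" by blast
      then show ?thesis by (intro exI[of _ "x#c"] exI[of _ d]) auto
    qed
  qed auto
qed (auto simp: pe_append)

lemma pe_sub: "path_edges (last c # d) \<subseteq> path_edges (c @ d)" if "c \<noteq> []"
  using that by (cases d) (auto simp: pe_append)

lemma path_prefix: "is_path E (a @ b) u v \<Longrightarrow> a \<noteq> [] \<Longrightarrow> is_path E a u (last a)"
  by (auto simp: is_path_succ successively_append_iff)

lemma path_suffix: "is_path E (a @ b) u v \<Longrightarrow> b \<noteq> [] \<Longrightarrow> is_path E b (hd b) v"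
  by (auto simp: is_path_succ successively_append_iff)

lemma path_snoc: "is_path E p u v \<Longrightarrow> {v,w} \<in> E \<Longrightarrow> w \<notin> set p \<Longrightarrow> is_path E (p @ [w]) u w"
  by (auto simp: is_path_succ successively_append_iff)

lemma path_rev: "is_path E p u v \<Longrightarrow> is_path E (rev p) v u"
  by (auto simp: is_path_succ hd_rev last_rev insert_commute)

lemma path_edges_in: "is_path E p u v \<Longrightarrow> path_edges p \<subseteq> E"
  unfolding is_path_def path_edges_def by auto




lemma has_cycleI: "3 \<le> length c \<Longrightarrow> distinct c \<Longrightarrow> successively (\<lambda>a b. {a,b} \<in> E) c
   \<Longrightarrow> {last c, hd c} \<in> E \<Longrightarrow> has_cycle E"
  unfolding has_cycle_def successively_conv_nth by blast

lemma distinct_hd_last: "distinct p \<Longrightarrow> p \<noteq> [] \<Longrightarrow> hd p = last p \<Longrightarrow> p = [hd p]"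
  by (cases p) (auto, metis last_in_set)

lemma path_unique:
  assumes nc: "\<not> has_cycle E"
  shows "is_path E p u v \<Longrightarrow> is_path E q u v \<Longrightarrow> p = q"
proof (induction p arbitrary: u q)
  case Nil then show ?case by (simp add: is_path_def)
next
  case (Cons u' p')
  from Cons.prems have u': "u' = u" by (simp add: is_path_def)
  obtain q' where q: "q = u # q'" using Cons.prems(2) by (cases q) (auto simp: is_path_def)
  show ?case
  proof (cases "p' = []")
    case True
    then have "u = v" using Cons.prems u' by (simp add: is_path_def)
    then have "q = [u]" using Cons.prems(2) distinct_hd_last[of q] by (auto simp: is_path_def)
    then show ?thesis using True u' by simp
  next
    case pne: False
    show ?thesis
    proof (cases "q' = []")
      case True
      then have "u = v" using Cons.prems q by (simp add: is_path_def)
      then have "u' # p' = [u]" using Cons.prems(1) distinct_hd_last[of "u'#p'"] by (auto simp: is_path_def)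
      then show ?thesis using pne by simp
    next
      case qne: False
      obtain x p'' where px: "p' = x # p''" using pne by (cases p') auto
      obtain y q'' where qy: "q' = y # q''" using qne by (cases q') auto
      show ?thesis
      proof (cases "x = y")
        case True
        have "is_path E p' x v" using Cons.prems(1) px pne
          by (auto simp: is_path_succ)
        moreover have "is_path E q' x v" using Cons.prems(2) q qy True qne
          by (auto simp: is_path_succ)
        ultimately have "p' = q'" by (rule Cons.IH)
        then show ?thesis using u' q by simp
      next
        case False
        have vp: "v \<in> set p'" using Cons.prems(1) pne by (auto simp: is_path_def)
        have vq: "v \<in> set q'" using Cons.prems(2) q qne by (auto simp: is_path_def)
        obtain A w B where pA: "p' = A @ w # B" and wq: "w \<in> set q'" and Aq: "\<forall>z\<in>set A. z \<notin> set q'"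
          using split_list_first_propE[of p' "\<lambda>z. z \<in> set q'"] vp vq by blast
        obtain C D where qC: "q' = C @ w # D" using wq split_list by metis
        define c where "c = u # A @ w # rev C"
        have dp: "distinct (u # A @ w # B)" using Cons.prems(1) u' pA by (simp add: is_path_def)
        have dq: "distinct (u # C @ w # D)" using Cons.prems(2) q qC by (simp add: is_path_def)
        have sp: "successively (\<lambda>a b. {a,b} \<in> E) (u # A @ w # B)"
          using Cons.prems(1) u' pA by (simp add: is_path_succ)
        have sq: "successively (\<lambda>a b. {a,b} \<in> E) (u # C @ w # D)"
          using Cons.prems(2) q qC by (simp add: is_path_succ)
        have AC: "A \<noteq> [] \<or> C \<noteq> []"
        proof (rule ccontr)
          assume "\<not> (A \<noteq> [] \<or> C \<noteq> [])"
          then have "x = w" "y = w" using pA px qC qy by auto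
          then show False using False by simp
        qed
        have "3 \<le> length c" using AC by (auto simp: c_def Suc_le_eq)
        moreover have "distinct c" using dp dq Aq qC by (auto simp: c_def)
        moreover have "successively (\<lambda>a b. {a,b} \<in> E) c"
        proof -
          have s1: "successively (\<lambda>a b. {a,b} \<in> E) (u # A @ [w])"
            using sp successively_append_iff[of _ "u # A @ [w]" B] by simp
          have s2: "successively (\<lambda>a b. {a,b} \<in> E) (C @ [w])"
            using sq successively_append_iff[of _ "u # C @ [w]" D] successively_Cons[of _ u "C @ [w]"] by simp
          have s3: "successively (\<lambda>a b. {a,b} \<in> E) (w # rev C)"
          proof -
            have e: "(\<lambda>x y. {y,x} \<in> E) = (\<lambda>x y. {x,y} \<in> E)" by (simp add: insert_commute)
            have "successively (\<lambda>a b. {a,b} \<in> E) (rev (C @ [w]))"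
              unfolding successively_rev e by (rule s2)
            then show ?thesis by simp
          qed
          have "successively (\<lambda>a b. {a,b} \<in> E) ((u # A @ [w]) @ rev C)"
            unfolding successively_append_iff using s1 s3 successively_Cons[of _ w "rev C"] by auto
          then show ?thesis by (simp add: c_def)
        qed
        moreover have "{last c, hd c} \<in> E"
        proof -
          have lc: "last c = y" using qC qy by (cases C) (auto simp: c_def)
          have "{u, y} \<in> E" using sq qC qy by (cases C) auto
          then show ?thesis using lc by (simp add: c_def insert_commute)
        qed
        ultimately have "has_cycle E" by (rule has_cycleI)
        then show ?thesis using nc by simp
      qed
    qed
  qed
qed




definition good :: "'v list \<Rightarrow> 'v set set \<Rightarrow> 'v set \<Rightarrow> bool" where
  "good l F f \<longleftrightarrow> (\<exists>a b. l = a @ b \<and> a \<noteq> [] \<and> b \<noteq> [] \<and> f = {last a, hd b} \<and> path_edges (last a # b) \<subseteq> F)"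

lemma good_mono: "good l F f \<Longrightarrow> F \<subseteq> G \<Longrightarrow> good l G f"
  unfolding good_def by blast

lemma good_snoc: "good l F f \<Longrightarrow> good (l @ [w]) (insert {last l, w} F) f"
proof -
  assume "good l F f"
  then obtain a b where ab: "l = a @ b" "a \<noteq> []" "b \<noteq> []" "f = {last a, hd b}" "path_edges (last a # b) \<subseteq> F"
    unfolding good_def by blast
  have "path_edges (last a # b @ [w]) = path_edges (last a # b) \<union> {{last l, w}}"
    using pe_append[of "last a # b" "[w]"] ab by simp
  then show ?thesis unfolding good_def using ab
    by (intro exI[of _ a] exI[of _ "b @ [w]"]) auto
qed

lemma up_good:
  assumes "l = c @ rev p" "f \<in> path_edges p"
  shows "good l (path_edges p) f"
proof -
  have "f \<in> path_edges (rev p)" using assms by simp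
  then obtain c' d' where cd: "rev p = c' @ d'" "c' \<noteq> []" "d' \<noteq> []" "f = {last c', hd d'}"
    unfolding pe_mem by blast
  have "path_edges (last c' # d') \<subseteq> path_edges p"
    using pe_sub[of c' d'] cd by (metis pe_rev)
  then show ?thesis unfolding good_def using assms cd
    by (intro exI[of _ "c @ c'"] exI[of _ d']) auto
qed

definition rpath :: "'v set set \<Rightarrow> 'v \<Rightarrow> 'v \<Rightarrow> 'v list" where
  "rpath E r v = (THE p. is_path E p r v)"

locale rtree =
  fixes T :: "('v, 'x) ptree" and r :: 'v
  assumes tree: "is_tree (verts T) (edges T)" and rV: "r \<in> verts T"
begin

abbreviation "V \<equiv> verts T"
abbreviation "Ed \<equiv> edges T"
abbreviation "\<pi> \<equiv> rpath Ed r"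

lemma nc: "\<not> has_cycle Ed" using tree by (simp add: is_tree_def)

lemma edge_form: "e \<in> Ed \<Longrightarrow> \<exists>u v. e = {u, v} \<and> u \<noteq> v \<and> u \<in> V \<and> v \<in> V"
  using tree by (simp add: is_tree_def)

lemma edge_V: "{u,v} \<in> Ed \<Longrightarrow> u \<in> V \<and> v \<in> V"
proof -
  assume "{u,v} \<in> Ed"
  then obtain a b where "{u,v} = {a,b}" "a \<in> V" "b \<in> V" using edge_form by blast
  then show ?thesis by (auto simp: doubleton_eq_iff)
qed

lemma edge_neq: "{u,v} \<in> Ed \<Longrightarrow> u \<noteq> v"
proof -
  assume "{u,v} \<in> Ed"
  then obtain a b where "{u,v} = {a,b}" "a \<noteq> b" using edge_form by blast
  then show ?thesis by (auto simp: doubleton_eq_iff)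
qed

lemma finite_E: "finite Ed"
proof -
  have "Ed \<subseteq> Pow V" using edge_form by blast
  moreover have "finite V" using tree by (simp add: is_tree_def)
  ultimately show ?thesis using finite_subset by blast
qed

lemma path_V: "is_path Ed p a b \<Longrightarrow> a \<in> V \<Longrightarrow> set p \<subseteq> V"
proof
  fix z assume p: "is_path Ed p a b" and a: "a \<in> V" and z: "z \<in> set p"
  then obtain i where i: "i < length p" "p ! i = z" by (auto simp: in_set_conv_nth)
  show "z \<in> V"
  proof (cases i)
    case 0 then show ?thesis using p a i by (auto simp: is_path_def hd_conv_nth)
  next
    case (Suc k)
    then have "{p ! k, p ! Suc k} \<in> Ed" using p i by (auto simp: is_path_def)
    then show ?thesis using edge_V i Suc by auto
  qed
qed

lemma pi_path: "v \<in> V \<Longrightarrow> is_path Ed (\<pi> v) r v"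
proof -
  assume v: "v \<in> V"
  then obtain p where p: "is_path Ed p r v" using tree rV v unfolding is_tree_def by blast
  show ?thesis unfolding rpath_def
    by (rule theI[of _ p]) (use p path_unique[OF nc, of p r v] in blast)+
qed

lemma pi_eq: "is_path Ed p r v \<Longrightarrow> \<pi> v = p"
proof -
  assume p: "is_path Ed p r v"
  show ?thesis unfolding rpath_def
    by (rule the_equality) (use p path_unique[OF nc, of _ r v p] in blast)+
qed

lemma pi_last: "v \<in> V \<Longrightarrow> last (\<pi> v) = v"
  using pi_path by (auto simp: is_path_def)

lemma pi_ne: "v \<in> V \<Longrightarrow> \<pi> v \<noteq> []"
  using pi_path by (auto simp: is_path_def)

lemma pi_prefix: "v \<in> V \<Longrightarrow> \<pi> v = a @ b \<Longrightarrow> a \<noteq> [] \<Longrightarrow> \<pi> (last a) = a"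
proof -
  assume v: "v \<in> V" and ab: "\<pi> v = a @ b" and a: "a \<noteq> []"
  have h0: "is_path Ed (a @ b) r v" using pi_path[OF v] ab by simp
  have h: "is_path Ed a r (last a)" using path_prefix[OF h0 a] .
  show ?thesis using pi_eq[OF h] by simp
qed

lemma pi_antisym:
  assumes "u \<in> V" "v \<in> V" "u \<in> set (\<pi> v)" "v \<in> set (\<pi> u)"
  shows "u = v"
proof -
  obtain a b where ab: "\<pi> v = a @ u # b" using assms(3) split_list by metis
  have "\<pi> u = a @ [u]" using pi_prefix[OF assms(2), of "a @ [u]" b] ab by simp
  then have vin: "v \<in> set (a @ [u])" using assms(4) by simp
  have d: "distinct (a @ u # b)" using pi_path[OF assms(2)] ab by (simp add: is_path_def)
  have lv: "last (a @ u # b) = v" using pi_last[OF assms(2)] ab by simp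
  show ?thesis
  proof (cases "b = []")
    case True then show ?thesis using lv by simp
  next
    case False
    then have "last (a @ u # b) = last b" by simp
    then have "v \<in> set b" using lv False last_in_set by metis
    moreover have "set b \<inter> set (a @ [u]) = {}" using d by auto
    ultimately show ?thesis using vin by blast
  qed
qed

lemma pi_dich:
  assumes e: "{u,v} \<in> Ed"
  shows "\<pi> v = \<pi> u @ [v] \<or> \<pi> u = \<pi> v @ [u]"
proof -
  have uV: "u \<in> V" and vV: "v \<in> V" using edge_V e by auto
  have uv: "u \<noteq> v" using edge_neq e by auto
  show ?thesis
  proof (cases "v \<in> set (\<pi> u)")
    case False
    have h: "is_path Ed (\<pi> u @ [v]) r v"
      by (rule path_snoc[OF pi_path[OF uV]]) (use e False in auto)
    show ?thesis using pi_eq[OF h] by simp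
  next
    case True
    then have "u \<notin> set (\<pi> v)" using pi_antisym uV vV uv by auto
    moreover have "{v,u} \<in> Ed" using e by (simp add: insert_commute)
    ultimately have h: "is_path Ed (\<pi> v @ [u]) r u"
      using path_snoc[OF pi_path[OF vV]] by auto
    show ?thesis using pi_eq[OF h] by simp
  qed
qed

lemma lower_end_eq:
  assumes e: "{u,v} \<in> Ed" and uin: "u \<in> set (\<pi> v)"
  shows "lower_end T r {u,v} = v"
proof -
  have uV: "u \<in> V" and vV: "v \<in> V" using edge_V e by auto
  have uv: "u \<noteq> v" using edge_neq e by auto
  show ?thesis unfolding lower_end_def
  proof (rule the_equality)
    show "\<exists>u'. {u, v} = {u', v} \<and> u' \<noteq> v \<and> (\<exists>p. is_path Ed p r v \<and> u' \<in> set p)"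
      using uv uin pi_path[OF vV] by blast
  next
    fix v' assume "\<exists>u'. {u, v} = {u', v'} \<and> u' \<noteq> v' \<and> (\<exists>p. is_path Ed p r v' \<and> u' \<in> set p)"
    then obtain u' p where h: "{u, v} = {u', v'}" "u' \<noteq> v'" "is_path Ed p r v'" "u' \<in> set p" by blast
    show "v' = v"
    proof (rule ccontr)
      assume "v' \<noteq> v"
      then have "v' = u" "u' = v" using h(1) by (auto simp: doubleton_eq_iff)
      then have "v \<in> set (\<pi> u)" using h pi_eq[OF h(3)] by simp
      then show False using pi_antisym uV vV uin uv by auto
    qed
  qed
qed

lemma split_edge:
  assumes xV: "x \<in> V" and ab: "\<pi> x = a @ b" "a \<noteq> []" "b \<noteq> []"
  shows "lower_end T r {last a, hd b} = hd b \<and> \<pi> (hd b) = a @ [hd b] \<and> {last a, hd b} \<in> Ed"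
proof -
  have pp: "is_path Ed (\<pi> x) r x" using pi_path xV by auto
  have "\<pi> x = (a @ [hd b]) @ tl b" using ab by simp
  then have p1: "\<pi> (hd b) = a @ [hd b]" using pi_prefix[OF xV, of "a @ [hd b]" "tl b"] by simp
  have ed: "{last a, hd b} \<in> Ed" using path_edges_in[OF pp] ab pe_mem by blast
  have "last a \<in> set (\<pi> (hd b))" using p1 ab by simp
  then show ?thesis using lower_end_eq ed p1 by auto
qed

end



context rtree begin

lemma path_good:
  "is_path Ed p x y \<Longrightarrow> x \<in> V \<Longrightarrow>
   (\<forall>f\<in>path_edges p. good (\<pi> x) (path_edges p) f \<or> good (\<pi> y) (path_edges p) f) \<and>
   ((\<nexists>p'' z. p = p'' @ [z, y] \<and> \<pi> y = \<pi> z @ [y]) \<longrightarrow> \<pi> x = butlast (\<pi> y) @ rev p)"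
proof (induction p arbitrary: y rule: rev_induct)
  case Nil then show ?case by (simp add: is_path_def)
next
  case (snoc y0 p')
  have yy: "y0 = y" using snoc.prems by (simp add: is_path_def)
  show ?case
  proof (cases "p' = []")
    case True
    then have "x = y" using snoc.prems yy by (simp add: is_path_def)
    have "butlast (\<pi> x) @ [last (\<pi> x)] = \<pi> x" using pi_ne[OF snoc.prems(2)] by simp
    then have h: "\<pi> x = butlast (\<pi> y) @ rev (p' @ [y])" using True yy \<open>x = y\<close> pi_last[OF snoc.prems(2)] by simp
    show ?thesis unfolding yy using h unfolding True by simp
  next
    case pne: False
    define y' where "y' = last p'"
    have pp: "is_path Ed (p' @ [y]) x y" using snoc.prems yy by simp
    have p'path: "is_path Ed p' x y'" using path_prefix[OF pp pne] y'_def by simp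
    have ed: "{y', y} \<in> Ed" using pp pne unfolding is_path_succ y'_def
      by (simp add: successively_append_iff)
    have ynot: "y \<notin> set p'" using pp by (simp add: is_path_def)
    have yV: "y \<in> V" and y'V: "y' \<in> V" using edge_V[OF ed] by auto
    have IH: "(\<forall>f\<in>path_edges p'. good (\<pi> x) (path_edges p') f \<or> good (\<pi> y') (path_edges p') f) \<and>
      ((\<nexists>p'' z. p' = p'' @ [z, y'] \<and> \<pi> y' = \<pi> z @ [y']) \<longrightarrow> \<pi> x = butlast (\<pi> y') @ rev p')"
      using snoc.IH[OF p'path snoc.prems(2)] .
    have pe: "path_edges (p' @ [y]) = insert {y', y} (path_edges p')"
      using pe_append[of p' "[y]"] pne y'_def by auto
    have ly': "last (\<pi> y') = y'" using pi_last[OF y'V] .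
    have IH1: "\<forall>f\<in>path_edges p'. good (\<pi> x) (path_edges p') f \<or> good (\<pi> y') (path_edges p') f"
      using IH by (rule conjunct1)
    have IH2: "(\<nexists>p'' z. p' = p'' @ [z, y'] \<and> \<pi> y' = \<pi> z @ [y']) \<longrightarrow> \<pi> x = butlast (\<pi> y') @ rev p'"
      using IH by (rule conjunct2)
    have sub: "path_edges p' \<subseteq> path_edges (p' @ [y])" unfolding pe by (rule subset_insertI)
    from pi_dich[OF ed] show ?thesis
    proof
      assume down: "\<pi> y = \<pi> y' @ [y]"
      have A: "\<forall>f\<in>path_edges (p' @ [y]). good (\<pi> x) (path_edges (p' @ [y])) f \<or> good (\<pi> y) (path_edges (p' @ [y])) f"
      proof
        fix f assume fin: "f \<in> path_edges (p' @ [y])"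
        then have "f = {y', y} \<or> f \<in> path_edges p'" unfolding pe by (rule insertE) simp_all
        then show "good (\<pi> x) (path_edges (p' @ [y])) f \<or> good (\<pi> y) (path_edges (p' @ [y])) f"
        proof
          assume f: "f = {y', y}"
          have pe2: "path_edges (last (\<pi> y') # [y]) = {{y', y}}" using ly' by simp
          have "good (\<pi> y) (path_edges (p' @ [y])) f"
            unfolding good_def
            apply (rule exI[of _ "\<pi> y'"], rule exI[of _ "[y]"])
            using down f pe2 ly' pi_ne[OF y'V] fin by simp
          then show ?thesis by (rule disjI2)
        next
          assume f: "f \<in> path_edges p'"
          then have "good (\<pi> x) (path_edges p') f \<or> good (\<pi> y') (path_edges p') f" using IH1 by (rule bspec[rotated])
          then show ?thesis
          proof
            assume "good (\<pi> x) (path_edges p') f"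
            then have "good (\<pi> x) (path_edges (p' @ [y])) f" using sub by (rule good_mono)
            then show ?thesis by (rule disjI1)
          next
            assume "good (\<pi> y') (path_edges p') f"
            then have g: "good (\<pi> y' @ [y]) (insert {last (\<pi> y'), y} (path_edges p')) f"
              by (rule good_snoc)
            have e1: "\<pi> y' @ [y] = \<pi> y" using down by (rule sym)
            have e2: "insert {last (\<pi> y'), y} (path_edges p') = path_edges (p' @ [y])" using pe ly' by simp
            have "good (\<pi> y) (path_edges (p' @ [y])) f" using g unfolding e1 e2 .
            then show ?thesis by (rule disjI2)
          qed
        qed
      qed
      have B: "\<exists>p'' z. p' @ [y] = p'' @ [z, y] \<and> \<pi> y = \<pi> z @ [y]"
        apply (rule exI[of _ "butlast p'"], rule exI[of _ y'])
        using down pne y'_def by simp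
      show ?thesis unfolding yy
      proof (intro conjI impI)
        show "\<forall>f\<in>path_edges (p' @ [y]). good (\<pi> x) (path_edges (p' @ [y])) f \<or> good (\<pi> y) (path_edges (p' @ [y])) f" by (rule A)
      next
        assume "\<nexists>p'' z. p' @ [y] = p'' @ [z, y] \<and> \<pi> y = \<pi> z @ [y]"
        then show "\<pi> x = butlast (\<pi> y) @ rev (p' @ [y])" using B by (rule notE)
      qed
    next
      assume up: "\<pi> y' = \<pi> y @ [y']"
      have nd: "\<nexists>p'' z. p' = p'' @ [z, y'] \<and> \<pi> y' = \<pi> z @ [y']"
      proof
        assume "\<exists>p'' z. p' = p'' @ [z, y'] \<and> \<pi> y' = \<pi> z @ [y']"
        then obtain p'' z where h1: "p' = p'' @ [z, y']" and h2: "\<pi> y' = \<pi> z @ [y']" by (elim exE conjE)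
        have zin: "z \<in> set p'" unfolding h1 by simp
        have zV: "z \<in> V" using path_V[OF p'path snoc.prems(2)] zin by (rule subsetD)
        have "\<pi> z @ [y'] = \<pi> y @ [y']" using h2 up by (rule trans[OF sym])
        then have pz: "\<pi> z = \<pi> y" by (rule append1_eq_conv[THEN iffD1, THEN conjunct1])
        have "z = last (\<pi> z)" using pi_last[OF zV] by (rule sym)
        also have "\<dots> = last (\<pi> y)" using pz by (rule arg_cong)
        also have "\<dots> = y" by (rule pi_last[OF yV])
        finally have "z = y" .
        then show False using ynot zin by simp
      qed
      then have ux: "\<pi> x = butlast (\<pi> y') @ rev p'" using IH2 by (rule mp[rotated])
      have ux2: "\<pi> x = butlast (\<pi> y) @ rev (p' @ [y])"
      proof -
        have bl: "butlast (\<pi> y) @ [last (\<pi> y)] = \<pi> y" using pi_ne[OF yV] by simp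
        have "\<pi> x = \<pi> y @ rev p'" using ux up by simp
        also have "\<dots> = (butlast (\<pi> y) @ [y]) @ rev p'" using bl pi_last[OF yV] by simp
        also have "\<dots> = butlast (\<pi> y) @ rev (p' @ [y])" using yy by simp
        finally show ?thesis .
      qed
      have G: "\<forall>f\<in>path_edges (p' @ [y]). good (\<pi> x) (path_edges (p' @ [y])) f"
        using up_good[OF ux2] by (rule ballI)
      show ?thesis unfolding yy
      proof (intro conjI impI ballI)
        fix f assume "f \<in> path_edges (p' @ [y])"
        then have "good (\<pi> x) (path_edges (p' @ [y])) f" using G by (rule bspec[rotated])
        then show "good (\<pi> x) (path_edges (p' @ [y])) f \<or> good (\<pi> y) (path_edges (p' @ [y])) f" by (rule disjI1)
      next
        show "\<pi> x = butlast (\<pi> y) @ rev (p' @ [y])" by (rule ux2)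
      qed
    qed
  qed
qed

end



context rtree begin

lemma prefix_ext:
  assumes "a0 @ b0 = a @ b" "length a0 \<le> length a"
  shows "\<exists>m. a = a0 @ m \<and> b0 = m @ b"
proof -
  have "take (length a0) (a0 @ b0) = take (length a0) (a @ b)" using assms(1) by simp
  then have "a0 = take (length a0) a" using assms(2) by simp
  then have a: "a = a0 @ drop (length a0) a" by (metis append_take_drop_id)
  then have "a0 @ b0 = a0 @ (drop (length a0) a @ b)" using assms(1) by (metis append.assoc)
  then have "b0 = drop (length a0) a @ b" by simp
  then show ?thesis using a by blast
qed

lemma sum_bound:
  fixes xt :: "'v set \<Rightarrow> real"
  assumes xnn: "\<forall>e\<in>Ed. xt e \<ge> 0"
    and wsmall: "\<forall>e\<in>Ed - E. wt T r xt E e < 1/4"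
    and LE: "L \<inter> E = {}"
    and qV: "q \<in> V"
  shows "sum xt {f. good (\<pi> q) L f} < 1/4"
proof (cases "{f. good (\<pi> q) L f} = {}")
  case True then show ?thesis by simp
next
  case False
  define S where "S = {a. \<exists>b. \<pi> q = a @ b \<and> a \<noteq> [] \<and> b \<noteq> [] \<and> path_edges (last a # b) \<subseteq> L}"
  from False obtain f0 where "good (\<pi> q) L f0" by blast
  then obtain a1 where a1: "a1 \<in> S" unfolding good_def S_def by blast
  define n where "n = (LEAST n. \<exists>a\<in>S. length a = n)"
  have "\<exists>a\<in>S. length a = n" unfolding n_def by (rule LeastI[of _ "length a1"]) (use a1 in blast)
  then obtain a0 where a0S: "a0 \<in> S" and a0n: "length a0 = n" by blast
  have nmin: "\<And>a. a \<in> S \<Longrightarrow> n \<le> length a" unfolding n_def by (rule Least_le) blast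
  from a0S obtain b0 where ab0: "\<pi> q = a0 @ b0" "a0 \<noteq> []" "b0 \<noteq> []" "path_edges (last a0 # b0) \<subseteq> L"
    unfolding S_def by blast
  define e0 where "e0 = {last a0, hd b0}"
  have se0: "lower_end T r e0 = hd b0 \<and> \<pi> (hd b0) = a0 @ [hd b0] \<and> e0 \<in> Ed"
    unfolding e0_def by (rule split_edge[OF qV ab0(1-3)])
  have "e0 \<in> path_edges (last a0 # b0)" unfolding e0_def pe_Cons using ab0(3) by simp
  then have e0L: "e0 \<in> L" using ab0(4) by blast
  then have "e0 \<in> Ed - E" using se0 LE by blast
  then have w0: "wt T r xt E e0 < 1/4" using wsmall by blast
  have GD: "{f. good (\<pi> q) L f} \<subseteq> Dset T r E e0"
  proof
    fix f assume "f \<in> {f. good (\<pi> q) L f}"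
    then obtain a b where ab: "\<pi> q = a @ b" "a \<noteq> []" "b \<noteq> []" "f = {last a, hd b}" "path_edges (last a # b) \<subseteq> L"
      unfolding good_def by blast
    have "a \<in> S" unfolding S_def using ab by blast
    then have "length a0 \<le> length a" using nmin a0n by simp
    then obtain m where m: "a = a0 @ m" "b0 = m @ b" using prefix_ext[of a0 b0 a b] ab0(1) ab(1) by metis
    have sf: "lower_end T r f = hd b \<and> \<pi> (hd b) = a @ [hd b] \<and> f \<in> Ed"
      unfolding ab(4) by (rule split_edge[OF qV ab(1-3)])
    have hbV: "hd b \<in> V" using sf edge_V ab(4) by blast
    have c1: "\<exists>p. is_path Ed p r (lower_end T r f) \<and> lower_end T r e0 \<in> set p"
    proof (intro exI conjI)
      show "is_path Ed (\<pi> (hd b)) r (lower_end T r f)" using pi_path[OF hbV] sf by simp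
      show "lower_end T r e0 \<in> set (\<pi> (hd b))"
      proof (cases "m = []")
        case True then show ?thesis using sf se0 m by simp
      next
        case False then show ?thesis using sf se0 m by (simp add: hd_append)
      qed
    qed
    have hdq: "hd (m @ [hd b]) = hd b0" using m ab(3) by (cases m) auto
    have pq: "is_path Ed (\<pi> q) r q" by (rule pi_path[OF qV])
    have "\<pi> q = a0 @ ((m @ [hd b]) @ tl b)" using ab0(1) m(2) ab(3) by simp
    then have "is_path Ed (a0 @ ((m @ [hd b]) @ tl b)) r q" using pq by simp
    then have "is_path Ed ((m @ [hd b]) @ tl b) (hd ((m @ [hd b]) @ tl b)) q" by (rule path_suffix) simp
    then have "is_path Ed (m @ [hd b]) (hd ((m @ [hd b]) @ tl b)) (last (m @ [hd b]))" by (rule path_prefix) simp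
    moreover have "hd ((m @ [hd b]) @ tl b) = hd b0" using m(2) ab(3) by simp
    ultimately have qp: "is_path Ed (m @ [hd b]) (hd b0) (hd b)" by simp
    have "path_edges (m @ [hd b]) \<subseteq> path_edges (last a0 # m @ [hd b])" unfolding pe_Cons by auto
    also have "\<dots> \<subseteq> path_edges ((last a0 # m @ [hd b]) @ tl b)" using pe_append[of "last a0 # m @ [hd b]" "tl b"] by blast
    also have "(last a0 # m @ [hd b]) @ tl b = last a0 # b0" using m(2) ab(3) by simp
    finally have "path_edges (m @ [hd b]) \<subseteq> L" using ab0(4) by blast
    then have c2: "\<exists>q. is_path Ed q (lower_end T r e0) (lower_end T r f) \<and> path_edges q \<inter> E = {}"
    proof (intro exI conjI)
      show "is_path Ed (m @ [hd b]) (lower_end T r e0) (lower_end T r f)" using qp se0 sf by simp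
      show "path_edges (m @ [hd b]) \<inter> E = {}" using \<open>path_edges (m @ [hd b]) \<subseteq> L\<close> LE by blast
    qed
    show "f \<in> Dset T r E e0" unfolding Dset_def using c1 c2 sf by blast
  qed
  have fin: "finite (Dset T r E e0)" using finite_E by (rule rev_finite_subset) (auto simp: Dset_def)
  have "sum xt {f. good (\<pi> q) L f} \<le> sum xt (Dset T r E e0)"
    by (rule sum_mono2[OF fin GD]) (use xnn in \<open>auto simp: Dset_def\<close>)
  also have "\<dots> = wt T r xt E e0" by (simp add: wt_def)
  finally show ?thesis using w0 by simp
qed

end



lemma sum_UN_le_nn:
  fixes f :: "'a \<Rightarrow> real"
  assumes "finite I" "\<forall>i\<in>I. finite (A i)" "\<forall>i\<in>I. \<forall>x\<in>A i. f x \<ge> 0"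
  shows "sum f (\<Union>i\<in>I. A i) \<le> (\<Sum>i\<in>I. sum f (A i))"
  using assms
proof (induction I rule: finite_induct)
  case empty then show ?case by simp
next
  case (insert i I)
  have fU: "finite (\<Union>j\<in>I. A j)" using insert by auto
  have fA: "finite (A i)" using insert by auto
  have nn: "0 \<le> sum f (A i \<inter> (\<Union>j\<in>I. A j))" using insert.prems by (intro sum_nonneg) auto
  have "sum f (\<Union>j\<in>insert i I. A j) = sum f (A i \<union> (\<Union>j\<in>I. A j))" by simp
  also have "\<dots> = sum f (A i) + sum f (\<Union>j\<in>I. A j) - sum f (A i \<inter> (\<Union>j\<in>I. A j))"
    by (rule sum_Un[OF fA fU])
  also have "\<dots> \<le> sum f (A i) + sum f (\<Union>j\<in>I. A j)" using nn by simp
  also have "\<dots> \<le> sum f (A i) + (\<Sum>j\<in>I. sum f (A j))" using insert by simp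
  also have "\<dots> = (\<Sum>j\<in>insert i I. sum f (A j))" using insert by simp
  finally show ?case .
qed

lemma Lset_elim:
  assumes "f \<in> Lset T Q"
  obtains a b c d where "Q = {a, b, c, d}" "restricts T Q (quartet_tree a b c d)"
    "f \<in> span_edges T {a, b} \<union> span_edges T {c, d}"
  using assms unfolding Lset_def mem_Collect_eq by (elim exE conjE) (rule that)

lemma span_sub_Lset:
  assumes "Q = {a, b, c, d}" "restricts T Q (quartet_tree a b c d)"
  shows "span_edges T {a, b} \<union> span_edges T {c, d} \<subseteq> Lset T Q"
proof
  fix f assume "f \<in> span_edges T {a, b} \<union> span_edges T {c, d}"
  then show "f \<in> Lset T Q" unfolding Lset_def mem_Collect_eq using assms by (intro exI conjI)
qed

lemma span_elim:
  assumes "f \<in> span_edges T P"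
  obtains p a b where "a \<in> P" "b \<in> P" "is_path (edges T) p (lab T a) (lab T b)" "f \<in> path_edges p"
proof -
  from assms obtain S where "S \<in> {path_edges p | p a b. a \<in> P \<and> b \<in> P \<and> is_path (edges T) p (lab T a) (lab T b)}" "f \<in> S"
    unfolding span_edges_def by (rule UnionE)
  then show ?thesis using that by blast
qed

lemma span_mono_pe:
  assumes "a \<in> P" "b \<in> P" "is_path (edges T) p (lab T a) (lab T b)"
  shows "path_edges p \<subseteq> span_edges T P"
  unfolding span_edges_def using assms by blast

theorem lemma5:
  fixes T :: "nat \<Rightarrow> ('v, 'x) ptree" and X :: "'x set" and t :: nat
    and \<rho> :: 'x and xt :: "'v set \<Rightarrow> real" and E :: "'v set set"
  assumes "t \<ge> 1"
    and "\<forall>i\<in>{1..t}. phylo X (T i)"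
    and "lp_optimal (T 1) (incomp_quartets X T t) xt"
    and "\<rho> \<in> X"
    and "round_reach (T 1) (lab (T 1) \<rho>) xt E"
    and "\<forall>e \<in> edges (T 1) - E. wt (T 1) (lab (T 1) \<rho>) xt E e < 1/4"
  shows "\<forall>Q \<in> incomp_quartets X T t. Lset (T 1) Q \<inter> E \<noteq> {}"
proof
  fix Q assume Q: "Q \<in> incomp_quartets X T t"
  show "Lset (T 1) Q \<inter> E \<noteq> {}"
  proof
    assume LE: "Lset (T 1) Q \<inter> E = {}"
    define T1 where "T1 = T 1"
    define r where "r = lab T1 \<rho>"
    have ph: "phylo X T1" using assms(1,2) unfolding T1_def by auto
    have labV: "lab T1 ` X \<subseteq> verts T1" using ph unfolding phylo_def by blast
    interpret rtree T1 r
    proof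
      show "is_tree (verts T1) (edges T1)" using ph unfolding phylo_def by blast
      show "r \<in> verts T1" using labV assms(4) unfolding r_def by blast
    qed
    have QX: "Q \<subseteq> X" and cQ: "card Q = 4" using Q unfolding incomp_quartets_def by auto
    have finQ: "finite Q" using cQ by (metis card.infinite zero_neq_numeral)
    have feas: "lp_feasible T1 (incomp_quartets X T t) xt" using assms(3) unfolding lp_optimal_def T1_def by blast
    have xnn: "\<forall>e\<in>Ed. xt e \<ge> 0" using feas unfolding lp_feasible_def by blast
    have one: "sum xt (Lset T1 Q) \<ge> 1" using feas Q unfolding lp_feasible_def by blast
    have wsmall: "\<forall>e\<in>Ed - E. wt T1 r xt E e < 1/4" using assms(6) unfolding T1_def r_def by blast
    have LE': "Lset T1 Q \<inter> E = {}" using LE unfolding T1_def .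
    define G where "G q = {f. good (\<pi> (lab T1 q)) (Lset T1 Q) f}" for q
    have Gsmall: "\<forall>q\<in>Q. sum xt (G q) < 1/4"
    proof
      fix q assume "q \<in> Q"
      then have "lab T1 q \<in> V" using QX labV by blast
      then show "sum xt (G q) < 1/4" unfolding G_def by (rule sum_bound[OF xnn wsmall LE'])
    qed
    have GE: "\<forall>q\<in>Q. G q \<subseteq> Ed"
    proof (intro ballI subsetI)
      fix q f assume q: "q \<in> Q" and f: "f \<in> G q"
      have qV: "lab T1 q \<in> V" using q QX labV by blast
      from f obtain a b where ab: "\<pi> (lab T1 q) = a @ b" "a \<noteq> []" "b \<noteq> []" "f = {last a, hd b}"
        unfolding G_def good_def by blast
      show "f \<in> Ed" using split_edge[OF qV ab(1-3)] ab(4) by simp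
    qed
    have Gfin: "\<forall>q\<in>Q. finite (G q)" using GE finite_E finite_subset by blast
    have LEd: "Lset T1 Q \<subseteq> Ed"
    proof
      fix f assume fL: "f \<in> Lset T1 Q"
      obtain a b c d where "f \<in> span_edges T1 {a, b} \<union> span_edges T1 {c, d}"
        using Lset_elim[OF fL] by metis
      then obtain P where fP: "f \<in> span_edges T1 P" by blast
      obtain p u v where pp: "is_path Ed p (lab T1 u) (lab T1 v)" and fp: "f \<in> path_edges p"
        using span_elim[OF fP] by metis
      show "f \<in> Ed" using path_edges_in[OF pp] fp by (rule subsetD)
    qed
    have cover: "Lset T1 Q \<subseteq> (\<Union>q\<in>Q. G q)"
    proof
      fix f assume fL: "f \<in> Lset T1 Q"
      obtain a b c d where abcd: "Q = {a, b, c, d}" "restricts T1 Q (quartet_tree a b c d)"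
        and fs: "f \<in> span_edges T1 {a, b} \<union> span_edges T1 {c, d}"
        using Lset_elim[OF fL] by metis
      have spL: "span_edges T1 {a, b} \<union> span_edges T1 {c, d} \<subseteq> Lset T1 Q"
        using abcd by (rule span_sub_Lset)
      obtain P where P: "P \<subseteq> Q" "f \<in> span_edges T1 P" "span_edges T1 P \<subseteq> Lset T1 Q"
      proof (cases "f \<in> span_edges T1 {a, b}")
        case True
        show ?thesis
        proof (rule that)
          show "{a,b} \<subseteq> Q" unfolding abcd(1) by blast
          show "f \<in> span_edges T1 {a,b}" by (rule True)
          show "span_edges T1 {a,b} \<subseteq> Lset T1 Q" using spL by (rule Un_subset_iff[THEN iffD1, THEN conjunct1])
        qed
      next
        case False
        then have "f \<in> span_edges T1 {c, d}" using fs by blast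
        show ?thesis
        proof (rule that)
          show "{c,d} \<subseteq> Q" unfolding abcd(1) by blast
          show "f \<in> span_edges T1 {c,d}" by fact
          show "span_edges T1 {c,d} \<subseteq> Lset T1 Q" using spL by (rule Un_subset_iff[THEN iffD1, THEN conjunct2])
        qed
      qed
      obtain p a' b' where pab: "a' \<in> P" "b' \<in> P" "is_path Ed p (lab T1 a') (lab T1 b')" "f \<in> path_edges p"
        using span_elim[OF P(2)] by metis
      have "path_edges p \<subseteq> span_edges T1 P" using pab(1-3) by (rule span_mono_pe)
      then have peL: "path_edges p \<subseteq> Lset T1 Q" using P(3) by (rule subset_trans)
      have a'Q: "a' \<in> Q" and b'Q: "b' \<in> Q" using pab P(1) by auto
      have a'V: "lab T1 a' \<in> V" using a'Q QX labV by blast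
      have "good (\<pi> (lab T1 a')) (path_edges p) f \<or> good (\<pi> (lab T1 b')) (path_edges p) f"
        using path_good[OF pab(3) a'V] pab(4) by blast
      then have "f \<in> G a' \<or> f \<in> G b'" unfolding G_def using good_mono[OF _ peL] by blast
      then show "f \<in> (\<Union>q\<in>Q. G q)" using a'Q b'Q by blast
    qed
    have "sum xt (Lset T1 Q) \<le> sum xt (\<Union>q\<in>Q. G q)"
    proof (rule sum_mono2)
      show "finite (\<Union>q\<in>Q. G q)" using finQ Gfin by blast
      show "Lset T1 Q \<subseteq> (\<Union>q\<in>Q. G q)" by (rule cover)
      show "\<And>b. b \<in> (\<Union>q\<in>Q. G q) - Lset T1 Q \<Longrightarrow> 0 \<le> xt b" using GE xnn by blast
    qed
    also have "\<dots> \<le> (\<Sum>q\<in>Q. sum xt (G q))"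
      by (rule sum_UN_le_nn[OF finQ Gfin]) (use GE xnn in blast)
    also have "\<dots> < (\<Sum>q\<in>Q. 1/4)"
      by (rule sum_strict_mono[OF finQ]) (use cQ Gsmall in auto)
    also have "\<dots> = 1" using cQ by simp
    finally show False using one by simp
  qed
qed


end
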